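(* Let $(S,+)$ be an infinite commutative semigroup admitting a family $(A_x)_{x\in S}$ of finite subsets of $S$ such that for every $x\in S$: $x\in A_x$; $x\notin S+(S\setminus A_x)$; and $|S\setminus\{y\in S : A_x\subseteq A_y\}|<|S|$. Let $M\subseteq S$ with $|M|=|S|$, and for each $x\in M$ let $B_x\subseteq S$ satisfy $B_x\subseteq A_x\subseteq B_x+B_x$. Then every diagonal $D$ of the family $(B_x)_{x\in M}$ satisfies $D+D=S$. Moreover, if $s\in\mathbb{N}\cup\{\infty\}$ and $s(B_x)\le s$ for all $x\in M$, then $s(D)\le s$.
   Context: For $X,Y\subseteq S$, $X+Y=\{u+v: u\in X, v\in Y\}$. A set $D$ is a diagonal of the family $(B_x)_{x\in M}$ if for every finite set $F$, the set $\{x\in M : F\cap D=F\cap B_x\}$ has cardinality $|M|$. For $X\subseteq S$ and $n\in S$, $r(X,n)=|\{(u,v)\in X\times X : u+v=n\}|$ and $s(X)=\sup_{n\in S} r(X,n)$. *)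

theory Defs
  imports Main "HOL-Library.Set_Algebras" "HOL-Library.Equipollence" "HOL-Library.Extended_Nat"
begin

definition is_diagonal :: "'a set \<Rightarrow> ('b \<Rightarrow> 'a set) \<Rightarrow> 'b set \<Rightarrow> bool" where
  "is_diagonal D B M \<longleftrightarrow>
     (\<forall>F. finite F \<longrightarrow> {x \<in> M. F \<inter> D = F \<inter> B x} \<approx> M)"

definition rep :: "'a::plus set \<Rightarrow> 'a \<Rightarrow> enat" where
  "rep X n = (let P = {(u, v). u \<in> X \<and> v \<in> X \<and> u + v = n} in
              if finite P then enat (card P) else \<infinity>)"

definition srep :: "'a::plus set \<Rightarrow> enat" where
  "srep X = (SUP n. rep X n)"

end

theory Submission
  imports Defs
begin

theorem mainTheorem7:
  fixes A :: "'a::ab_semigroup_add \<Rightarrow> 'a set"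
    and B :: "'a \<Rightarrow> 'a set"
    and M D :: "'a set"
    and s :: enat
  assumes inf: "infinite (UNIV :: 'a set)"
    and A_fin: "\<And>x. finite (A x)"
    and A_mem: "\<And>x. x \<in> A x"
    and A_irr: "\<And>x. x \<notin> (UNIV :: 'a set) + (UNIV - A x)"
    and A_small: "\<And>x. (UNIV - {y. A x \<subseteq> A y}) \<prec> (UNIV :: 'a set)"
    and M_card: "M \<approx> (UNIV :: 'a set)"
    and B_sub: "\<And>x. x \<in> M \<Longrightarrow> B x \<subseteq> A x"
    and A_sub: "\<And>x. x \<in> M \<Longrightarrow> A x \<subseteq> B x + B x"
    and diag: "is_diagonal D B M"
  shows "D + D = (UNIV :: 'a set)
         \<and> ((\<forall>x\<in>M. srep (B x) \<le> s) \<longrightarrow> srep D \<le> s)"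
proof -
  have irr: "u \<in> A n \<and> v \<in> A n" if "u + v = n" for u v n
  proof -
    have "v \<in> A n"
    proof (rule ccontr)
      assume "v \<notin> A n"
      then have "u + v \<in> (UNIV :: 'a set) + (UNIV - A n)" by (auto intro: set_plus_intro)
      with A_irr[of n] that show False by simp
    qed
    moreover have "u \<in> A n"
    proof (rule ccontr)
      assume "u \<notin> A n"
      then have "v + u \<in> (UNIV :: 'a set) + (UNIV - A n)" by (auto intro: set_plus_intro)
      with A_irr[of n] that show False by (simp add: add.commute)
    qed
    ultimately show ?thesis by simp
  qed
  define X where "X n = {x \<in> M. A n \<inter> D = A n \<inter> B x}" for n
  have XM: "X n \<approx> (UNIV :: 'a set)" for n
    using diag A_fin M_card unfolding is_diagonal_def X_def by (meson eqpoll_trans)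
  have Xgood: "\<exists>x\<in>X n. A n \<subseteq> A x" for n
  proof (rule ccontr)
    assume "\<not> ?thesis"
    then have "X n \<subseteq> UNIV - {y. A n \<subseteq> A y}" by auto
    then have "X n \<prec> (UNIV :: 'a set)"
      using A_small[of n] by (meson subset_imp_lepoll lesspoll_trans1)
    then have "(UNIV :: 'a set) \<prec> UNIV" using XM[of n] eqpoll_sym eq_lesspoll_trans by blast
    then show False using lesspoll_not_refl by blast
  qed
  have part1: "D + D = (UNIV :: 'a set)"
  proof (rule set_eqI, rule iffI)
    fix n :: 'a
    assume "n \<in> UNIV"
    obtain x where x: "x \<in> X n" "A n \<subseteq> A x" using Xgood by blast
    then have xM: "x \<in> M" and eq: "A n \<inter> D = A n \<inter> B x" by (auto simp: X_def)
    have "n \<in> B x + B x" using A_mem[of n] x(2) A_sub[OF xM] by blast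
    then obtain u v where uv: "u \<in> B x" "v \<in> B x" "n = u + v" by (auto elim: set_plus_elim)
    then have "u \<in> A n" "v \<in> A n" using irr by auto
    then have "u \<in> D" "v \<in> D" using eq uv by blast+
    then show "n \<in> D + D" using uv(3) by (auto intro: set_plus_intro)
  qed simp
  have part2: "srep D \<le> s" if H: "\<forall>x\<in>M. srep (B x) \<le> s"
    unfolding srep_def
  proof (rule SUP_least)
    fix n :: 'a
    assume "n \<in> UNIV"
    have "X n \<noteq> {}"
    proof
      assume "X n = {}"
      then have "(UNIV :: 'a set) \<approx> ({} :: 'a set)" using XM[of n] eqpoll_sym by metis
      then show False using inf by (metis eqpoll_finite_iff finite.emptyI)
    qed
    then obtain x where x: "x \<in> X n" by blast
    then have xM: "x \<in> M" and eq: "A n \<inter> D = A n \<inter> B x" by (auto simp: X_def)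
    have "{(u, v). u \<in> D \<and> v \<in> D \<and> u + v = n} = {(u, v). u \<in> B x \<and> v \<in> B x \<and> u + v = n}"
    proof -
      have "u \<in> D \<longleftrightarrow> u \<in> B x" "v \<in> D \<longleftrightarrow> v \<in> B x" if "u + v = n" for u v
        using irr[OF that] eq by blast+
      then show ?thesis by blast
    qed
    then have "rep D n = rep (B x) n" by (simp add: rep_def)
    also have "\<dots> \<le> srep (B x)" unfolding srep_def by (rule SUP_upper) simp
    also have "\<dots> \<le> s" using H xM by blast
    finally show "rep D n \<le> s" .
  qed
  show ?thesis using part1 part2 by blast
qed

end
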